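(* Let $J$ be a set and $S_J$ the group of all permutations of $J$, acting on $\ell^\infty(J,\mathbb R)$ by $\sigma.x=x\circ\sigma^{-1}$. Then every $S_J$-invariant non-empty open convex cone in $\ell^\infty(J,\mathbb R)$ contains a constant function.
   Context: $\ell^\infty(J,\mathbb R)$ is the Banach space of bounded real functions on $J$ with the sup norm. A convex cone $W$ satisfies $W+W\subseteq W$ and $tW\subseteq W$ for all $t>0$. *)

theory Defs
  imports "HOL-Analysis.Analysis"
begin

definition linf :: "('j \<Rightarrow> real) set" where
  "linf = {x. bdd_above (range (\<lambda>j. \<bar>x j\<bar>))}"

definition linf_norm :: "('j \<Rightarrow> real) \<Rightarrow> real" where
  "linf_norm x = (SUP j. \<bar>x j\<bar>)"

definition linf_open :: "('j \<Rightarrow> real) set \<Rightarrow> bool" where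
  "linf_open W \<longleftrightarrow> W \<subseteq> linf \<and>
     (\<forall>x\<in>W. \<exists>e>0. \<forall>y\<in>linf. linf_norm (\<lambda>j. y j - x j) < e \<longrightarrow> y \<in> W)"

definition convex_cone_pos :: "('j \<Rightarrow> real) set \<Rightarrow> bool" where
  "convex_cone_pos W \<longleftrightarrow> (\<forall>x\<in>W. \<forall>y\<in>W. (\<lambda>j. x j + y j) \<in> W) \<and>
     (\<forall>x\<in>W. \<forall>t>0. (\<lambda>j. t * x j) \<in> W)"

definition perm_invariant :: "('j \<Rightarrow> real) set \<Rightarrow> bool" where
  "perm_invariant W \<longleftrightarrow> (\<forall>\<sigma>::'j \<Rightarrow> 'j. bij \<sigma> \<longrightarrow> (\<forall>x\<in>W. x \<circ> inv \<sigma> \<in> W))"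

end

theory Submission imports Defs begin
unbundle cardinal_syntax

lemma fin_less_inf: "finite (A::'a set) \<Longrightarrow> \<not> finite (C::'b set) \<Longrightarrow> |A| <o |C|"
  using finite_ordLess_infinite[of "|A|" "|C|"] card_of_Well_order Field_card_of by metis

lemma union_less:
  assumes "finite I" "\<not> finite (C::'b set)" "\<forall>i\<in>I. |A i| <o |C|"
  shows "|\<Union>i\<in>I. (A i :: 'a set)| <o |C|"
  using assms
proof (induction I rule: finite_induct)
  case empty
  then show ?case using fin_less_inf[of "{}::'a set" C] by simp
next
  case (insert i I)
  then show ?case using card_of_Un_ordLess_infinite[of C "A i" "\<Union>i\<in>I. A i"] by simp
qed

lemma big_class:
  fixes A :: "'i \<Rightarrow> 'a set"
  assumes "finite I" "\<not> finite (UNIV::'a set)" "(\<Union>i\<in>I. A i) = UNIV"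
  shows "\<exists>i\<in>I. |UNIV::'a set| \<le>o |A i|"
proof (rule ccontr)
  assume "\<not> ?thesis"
  hence "\<forall>i\<in>I. |A i| <o |UNIV::'a set|"
    using not_ordLess_iff_ordLeq card_of_Well_order by blast
  hence "|\<Union>i\<in>I. A i| <o |UNIV::'a set|" using union_less assms by blast
  thus False using assms(3) ordLess_irreflexive by metis
qed

lemma inj_prod:
  assumes "\<not> finite (UNIV::'a set)" "|UNIV::'a set| \<le>o |L|" "(N::nat) > 0"
  shows "\<exists>f. inj_on f ((B::'a set) \<times> {..<N}) \<and> f ` (B \<times> {..<N}) \<subseteq> L"
proof -
  have le: "|{..<N}| \<le>o |UNIV::'a set|"
    using fin_less_inf[of "{..<N}" "UNIV::'a set"] assms ordLess_imp_ordLeq by blast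
  have ne: "{..<N} \<noteq> {}" using assms(3) by auto
  have 1: "|(UNIV::'a set) \<times> {..<N}| =o |UNIV::'a set|"
    using card_of_Times_infinite[OF assms(1) ne le] by blast
  have 2: "|B \<times> {..<N}| \<le>o |(UNIV::'a set) \<times> {..<N}|" by (rule card_of_mono1) auto
  have "|B \<times> {..<N}| \<le>o |L|"
    using 1 2 assms(2) ordLeq_ordIso_trans ordLeq_transitive by blast
  thus ?thesis using card_of_ordLeq by blast
qed

lemma sum_in_W:
  fixes N :: nat and f :: "nat \<Rightarrow> 'j \<Rightarrow> real"
  assumes "convex_cone_pos W" "\<forall>i<N. f i \<in> W" "N > 0"
  shows "(\<lambda>j. \<Sum>i<N. f i j) \<in> W"
  using assms(2,3)
proof (induction N)
  case 0 then show ?case by simp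
next
  case (Suc n)
  show ?case
  proof (cases "n = 0")
    case True
    then show ?thesis using Suc.prems by simp
  next
    case False
    then have h1: "(\<lambda>j. \<Sum>i<n. f i j) \<in> W" using Suc by simp
    have h2: "f n \<in> W" using Suc.prems by simp
    have "\<forall>a\<in>W. \<forall>b\<in>W. (\<lambda>j. a j + b j) \<in> W"
      using assms(1) unfolding convex_cone_pos_def by (rule conjunct1)
    from this[rule_format, OF h1 h2] have "(\<lambda>j. (\<Sum>i<n. f i j) + f n j) \<in> W" by simp
    then show ?thesis by simp
  qed
qed

lemma key:
  fixes W :: "('j \<Rightarrow> real) set" and x :: "'j \<Rightarrow> real" and \<sigma> :: "nat \<Rightarrow> 'j \<Rightarrow> 'j" and N :: nat
  assumes lo: "linf_open W" and cc: "convex_cone_pos W" and pi: "perm_invariant W"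
    and xW: "x \<in> W" and ball: "\<forall>y\<in>linf. linf_norm (\<lambda>j. y j - x j) < e \<longrightarrow> y \<in> W"
    and N: "N > 0" and bij: "\<forall>i<N. bij (\<sigma> i)" and e': "e' < e"
    and bd: "\<forall>j. \<bar>c - (\<Sum>i<N. x (\<sigma> i j)) / N\<bar> \<le> e'"
  shows "\<exists>c::real. (\<lambda>_. c) \<in> W"
proof -
  have "x \<in> linf" using lo xW unfolding linf_open_def by blast
  then obtain M where M: "\<forall>j. \<bar>x j\<bar> \<le> M" unfolding linf_def bdd_above_def by auto
  define d where "d j = c - (\<Sum>i<N. x (\<sigma> i j)) / N" for j
  define w where "w i j = x j + d (inv (\<sigma> i) j)" for i j
  have wW: "w i \<in> W" if i: "i < N" for i
  proof -
    have "\<bar>w i j\<bar> \<le> M + e'" for j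
      using M[rule_format, of j] bd[rule_format, of "inv (\<sigma> i) j"] unfolding w_def d_def by linarith
    hence "w i \<in> linf" unfolding linf_def bdd_above_def by auto
    moreover have "linf_norm (\<lambda>j. w i j - x j) \<le> e'"
      unfolding linf_norm_def
    proof (rule cSUP_least)
      show "UNIV \<noteq> {}" by simp
      fix j
      show "\<bar>w i j - x j\<bar> \<le> e'" using bd unfolding w_def d_def by simp
    qed
    hence "linf_norm (\<lambda>j. w i j - x j) < e" using e' by linarith
    ultimately show ?thesis using ball[rule_format, of "w i"] by simp
  qed
  have "(\<lambda>j. x (\<sigma> i j) + d j) \<in> W" if i: "i < N" for i
  proof -
    have b: "bij (inv (\<sigma> i))" using bij i bij_imp_bij_inv by blast
    have "\<forall>\<tau>::'j \<Rightarrow> 'j. bij \<tau> \<longrightarrow> (\<forall>y\<in>W. y \<circ> inv \<tau> \<in> W)"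
      using pi unfolding perm_invariant_def .
    from this[rule_format, OF b wW[OF i]] have "w i \<circ> inv (inv (\<sigma> i)) \<in> W" .
    moreover have "inv (inv (\<sigma> i)) = \<sigma> i" using bij i inv_inv_eq by blast
    moreover have "inv (\<sigma> i) (\<sigma> i j) = j" for j using bij i bij_is_inj inv_f_f by metis
    ultimately show ?thesis unfolding w_def comp_def by simp
  qed
  hence "(\<lambda>j. \<Sum>i<N. x (\<sigma> i j) + d j) \<in> W"
    using sum_in_W[OF cc _ N, of "\<lambda>i j. x (\<sigma> i j) + d j"] by simp
  moreover have "(\<lambda>j. \<Sum>i<N. x (\<sigma> i j) + d j) = (\<lambda>_. real N * c)"
  proof
    fix j
    have "(\<Sum>i<N. x (\<sigma> i j) + d j) = (\<Sum>i<N. x (\<sigma> i j)) + real N * d j"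
      by (simp add: sum.distrib)
    also have "\<dots> = real N * c" using N unfolding d_def by (simp add: field_simps)
    finally show "(\<Sum>i<N. x (\<sigma> i j) + d j) = real N * c" .
  qed
  ultimately show ?thesis by (intro exI[of _ "real N * c"]) simp
qed

lemma modcancel:
  fixes a b n i :: nat
  assumes "a < n" "b < n" "(a+i) mod n = (b+i) mod n"
  shows "a = b"
proof -
  have *: "a = b" if h: "a < n" "b < n" "(a+i) mod n = (b+i) mod n" "b \<le> a" for a b
  proof -
    have "n dvd (a+i) - (b+i)" using mod_eq_dvd_iff_nat[of "b+i" "a+i" n] h by simp
    hence "n dvd a - b" by simp
    moreover have "a - b < n" using h by simp
    ultimately have "a - b = 0" using dvd_imp_le by (metis neq0_conv not_le)
    thus ?thesis using h by simp
  qed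
  show ?thesis using *[of a b] *[of b a] assms by (metis linorder_le_cases)
qed

lemma finite_case:
  fixes x :: "'j \<Rightarrow> real"
  assumes fin: "finite (UNIV::'j set)"
  shows "\<exists>(N::nat) (\<sigma>::nat \<Rightarrow> 'j \<Rightarrow> 'j) (c::real). N > 0 \<and> (\<forall>i<N. bij (\<sigma> i)) \<and> (\<forall>j. \<bar>c - (\<Sum>i<N. x (\<sigma> i j)) / real N\<bar> \<le> 0)"
proof -
  define n where "n = card (UNIV::'j set)"
  have n0: "n > 0" unfolding n_def using fin by (simp add: finite_UNIV_card_ge_0)
  obtain h where h: "bij_betw h {0..<n} (UNIV::'j set)" unfolding n_def using ex_bij_betw_nat_finite[OF fin] by blast
  define g where "g = inv_into {0..<n} h"
  have g: "g j < n" for j using bij_betw_inv_into[OF h] unfolding g_def bij_betw_def by auto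
  have hg: "h (g j) = j" for j using bij_betw_inv_into_right[OF h] unfolding g_def by simp
  have hinj: "inj_on h {0..<n}" using h bij_betw_def by blast
  define \<sigma> where "\<sigma> i j = h ((g j + i) mod n)" for i j
  have bij: "bij (\<sigma> i)" for i
  proof -
    have "inj (\<sigma> i)"
    proof (rule injI)
      fix a b assume "\<sigma> i a = \<sigma> i b"
      hence "(g a + i) mod n = (g b + i) mod n" unfolding \<sigma>_def using hinj n0
        by (meson atLeastLessThan_iff inj_on_def mod_less_divisor zero_le)
      hence "g a = g b" using modcancel g by blast
      thus "a = b" using hg by metis
    qed
    thus ?thesis using fin finite_UNIV_inj_surj bij_def by blast
  qed
  define c where "c = (\<Sum>m<n. x (h m)) / n"
  have "(\<Sum>i<n. x (\<sigma> i j)) = (\<Sum>m<n. x (h m))" for j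
  proof -
    let ?k = "g j"
    let ?p = "\<lambda>i. (?k + i) mod n"
    have inj: "inj_on ?p {..<n}" proof (rule inj_onI)
      fix a b assume "a \<in> {..<n}" "b \<in> {..<n}" "?p a = ?p b"
      thus "a = b" using modcancel[of a n b "g j"] by (simp add: add.commute)
    qed
    have sub: "?p ` {..<n} \<subseteq> {..<n}" using n0 by auto
    have "?p ` {..<n} = {..<n}" using endo_inj_surj[OF _ sub inj] by simp
    hence bb: "bij_betw ?p {..<n} {..<n}" using inj bij_betw_def by blast
    have "(\<Sum>i<n. x (\<sigma> i j)) = (\<Sum>i<n. (\<lambda>m. x (h m)) (?p i))" unfolding \<sigma>_def by simp
    also have "\<dots> = (\<Sum>m<n. x (h m))" using sum.reindex_bij_betw[OF bb, of "\<lambda>m. x (h m)"] .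
    finally show ?thesis .
  qed
  hence "\<forall>j. \<bar>c - (\<Sum>i<n. x (\<sigma> i j)) / n\<bar> \<le> 0" unfolding c_def by simp
  thus ?thesis using n0 bij by blast
qed

lemma infinite_case:
  fixes x :: "'j \<Rightarrow> real"
  assumes inf: "\<not> finite (UNIV::'j set)" and M: "\<forall>j. \<bar>x j\<bar> \<le> M" and e: "e > 0"
  shows "\<exists>(N::nat) (\<sigma>::nat \<Rightarrow> 'j \<Rightarrow> 'j) (c::real). N > 0 \<and> (\<forall>i<N. bij (\<sigma> i)) \<and> (\<forall>j. \<bar>c - (\<Sum>i<N. x (\<sigma> i j)) / real N\<bar> \<le> e / 2)"
proof -
  define \<delta> where "\<delta> = e / 4"
  have d0: "\<delta> > 0" using e unfolding \<delta>_def by simp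
  define q where "q j = \<lfloor>x j / \<delta>\<rfloor>" for j
  have "range q \<subseteq> {\<lfloor>-M / \<delta>\<rfloor>..\<lfloor>M / \<delta>\<rfloor>}"
  proof
    fix k assume "k \<in> range q"
    then obtain j where k: "k = q j" by blast
    have "-M \<le> x j" "x j \<le> M" using M[rule_format, of j] by linarith+
    hence "-M / \<delta> \<le> x j / \<delta>" "x j / \<delta> \<le> M / \<delta>" using d0 divide_right_mono[of "-M" "x j" \<delta>] divide_right_mono[of "x j" M \<delta>] by simp_all
    thus "k \<in> {\<lfloor>-M / \<delta>\<rfloor>..\<lfloor>M / \<delta>\<rfloor>}" unfolding k q_def by (simp add: floor_mono)
  qed
  hence finF: "finite (range q)" using finite_subset by blast
  have "(\<Union>k\<in>range q. {j. q j = k}) = UNIV" by auto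
  then obtain k where kF: "k \<in> range q" and big: "|UNIV::'j set| \<le>o |{j. q j = k}|"
    using big_class[OF finF inf] by blast
  define L where "L = {j. q j = k}"
  define c where "c = real_of_int k * \<delta>"
  have inL: "\<bar>x j - c\<bar> < \<delta>" if "j \<in> L" for j
  proof -
    have "real_of_int k \<le> x j / \<delta>" "x j / \<delta> < real_of_int k + 1"
      using that unfolding L_def q_def by (simp_all add: floor_eq_iff)
    hence "real_of_int k * \<delta> \<le> x j" "x j < (real_of_int k + 1) * \<delta>"
      using d0 by (simp_all add: pos_le_divide_eq pos_divide_less_eq)
    thus ?thesis unfolding c_def by (simp add: algebra_simps)
  qed
  obtain j0 where j0: "j0 \<in> L" using kF unfolding L_def by blast
  define R where "R = 2 * M + \<delta>"
  have allR: "\<bar>x j - c\<bar> \<le> R" for j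
    using M[rule_format, of j] M[rule_format, of j0] inL[OF j0] unfolding R_def by linarith
  have R0: "0 \<le> R" using allR[of j0] abs_ge_zero[of "x j0 - c"] by linarith
  define N where "N = nat \<lceil>R / \<delta>\<rceil> + 1"
  have N0: "N > 0" unfolding N_def by simp
  have "R / \<delta> \<le> real N" unfolding N_def by linarith
  hence RN: "R \<le> real N * \<delta>" using d0 by (simp add: pos_divide_le_eq)
  define B where "B = - L"
  obtain f where finj: "inj_on f (B \<times> {..<N})" and fL: "f ` (B \<times> {..<N}) \<subseteq> L"
    using inj_prod[OF inf big[folded L_def] N0, of B] by blast
  define h where "h i b = f (b, i)" for i b
  define \<tau> where "\<tau> i j = (if j \<in> B then h i j else if j \<in> h i ` B then inv_into B (h i) j else j)" for i j
  have hL: "h i b \<in> L" if "b \<in> B" "i < N" for i b using fL that unfolding h_def by auto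
  have hinj: "inj_on (h i) B" if "i < N" for i
    using finj that unfolding h_def inj_on_def by auto
  have invol: "\<tau> i (\<tau> i j) = j" if i: "i < N" for i j
  proof (cases "j \<in> B")
    case True
    have "h i j \<notin> B" using hL[OF True i] unfolding B_def by simp
    moreover have "h i j \<in> h i ` B" using True by simp
    ultimately show ?thesis unfolding \<tau>_def using True inv_into_f_f[OF hinj[OF i] True] by simp
  next
    case False
    show ?thesis
    proof (cases "j \<in> h i ` B")
      case True
      have "inv_into B (h i) j \<in> B" using True by (simp add: inv_into_into)
      moreover have "h i (inv_into B (h i) j) = j" using True by (simp add: f_inv_into_f)
      ultimately show ?thesis unfolding \<tau>_def using False True by simp
    next
      case F2: False
      have "\<tau> i j = j" unfolding \<tau>_def using False F2 by (simp only: if_False)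
      thus ?thesis by simp
    qed
  qed
  have bij: "\<forall>i<N. bij (\<tau> i)"
  proof (intro allI impI)
    fix i assume iN: "i < N"
    show "bij (\<tau> i)" by (rule involuntory_imp_bij) (rule invol[OF iN])
  qed
  have bound: "\<bar>c - (\<Sum>i<N. x (\<tau> i j)) / real N\<bar> \<le> e / 2" for j
  proof -
    obtain i0 where i0: "\<forall>i<N. j \<in> h i ` B \<longrightarrow> i = i0"
    proof (cases "\<exists>i<N. j \<in> h i ` B")
      case True
      then obtain i1 b1 where i1: "i1 < N" "b1 \<in> B" "j = h i1 b1" by blast
      have "\<forall>i<N. j \<in> h i ` B \<longrightarrow> i = i1"
      proof (intro allI impI)
        fix i assume "i < N" "j \<in> h i ` B"
        then obtain b where "b \<in> B" "j = h i b" by blast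
        hence "f (b, i) = f (b1, i1)" using i1 unfolding h_def by simp
        moreover have "(b, i) \<in> B \<times> {..<N}" "(b1, i1) \<in> B \<times> {..<N}" using \<open>b \<in> B\<close> \<open>i < N\<close> i1 by auto
        ultimately have "(b, i) = (b1, i1)" using inj_onD[OF finj] by blast
        thus "i = i1" by simp
      qed
      thus ?thesis using that by blast
    next
      case False
      thus ?thesis using that by blast
    qed
    have tb: "\<bar>x (\<tau> i j) - c\<bar> \<le> \<delta> + (if i = i0 then R else 0)" if i: "i < N" for i
    proof (cases "j \<in> h i ` B")
      case True
      hence "i = i0" using i0 i by blast
      thus ?thesis using allR[of "\<tau> i j"] d0 by simp
    next
      case False
      have "\<tau> i j \<in> L"
      proof (cases "j \<in> B")
        case True thus ?thesis unfolding \<tau>_def using hL i by simp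
      next
        case F3: False thus ?thesis unfolding \<tau>_def using False B_def by simp
      qed
      hence "\<bar>x (\<tau> i j) - c\<bar> < \<delta>" by (rule inL)
      moreover have "0 \<le> (if i = i0 then R else 0)" using R0 by simp
      ultimately show ?thesis by linarith
    qed
    have "(\<Sum>i<N. \<bar>x (\<tau> i j) - c\<bar>) \<le> (\<Sum>i<N. \<delta> + (if i = i0 then R else 0))"
      by (rule sum_mono) (use tb in auto)
    also have "\<dots> = real N * \<delta> + (if i0 < N then R else 0)"
      by (simp add: sum.distrib)
    also have "\<dots> \<le> real N * \<delta> + R" using R0 by simp
    finally have S: "(\<Sum>i<N. \<bar>x (\<tau> i j) - c\<bar>) \<le> 2 * (real N * \<delta>)" using RN by linarith
    have "c - (\<Sum>i<N. x (\<tau> i j)) / real N = (\<Sum>i<N. c - x (\<tau> i j)) / real N"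
      using N0 by (simp add: sum_subtractf field_simps)
    hence "\<bar>c - (\<Sum>i<N. x (\<tau> i j)) / real N\<bar> = \<bar>\<Sum>i<N. c - x (\<tau> i j)\<bar> / real N" by simp
    also have "\<dots> \<le> (\<Sum>i<N. \<bar>x (\<tau> i j) - c\<bar>) / real N"
      using sum_abs[of "\<lambda>i. c - x (\<tau> i j)" "{..<N}"] N0
      by (simp add: divide_right_mono abs_minus_commute)
    also have "\<dots> \<le> 2 * (real N * \<delta>) / real N" using divide_right_mono[OF S, of "real N"] N0 by simp
    also have "\<dots> = e / 2" using N0 unfolding \<delta>_def by simp
    finally show ?thesis .
  qed
  show ?thesis using N0 bij bound by blast
qed

theorem lemma4p5:
  fixes W :: "('j \<Rightarrow> real) set"
  assumes "W \<noteq> {}"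
    and "linf_open W"
    and "convex_cone_pos W"
    and "perm_invariant W"
  shows "\<exists>c::real. (\<lambda>_. c) \<in> W"
proof -
  obtain x where xW: "x \<in> W" using assms(1) by blast
  obtain e where e: "e > 0" and ball: "\<forall>y\<in>linf. linf_norm (\<lambda>j. y j - x j) < e \<longrightarrow> y \<in> W"
    using assms(2) xW unfolding linf_open_def by blast
  have "x \<in> linf" using assms(2) xW unfolding linf_open_def by blast
  then obtain M where M: "\<forall>j. \<bar>x j\<bar> \<le> M" unfolding linf_def bdd_above_def by auto
  show ?thesis
  proof (cases "finite (UNIV::'j set)")
    case True
    then obtain N \<sigma> c where "N > 0" "\<forall>i<N. bij (\<sigma> i :: 'j \<Rightarrow> 'j)"
        "\<forall>j. \<bar>c - (\<Sum>i<N. x (\<sigma> i j)) / real N\<bar> \<le> 0"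
      using finite_case[of x] by blast
    then show ?thesis using key[OF assms(2,3,4) xW ball, of N \<sigma> 0 c] e by blast
  next
    case False
    then obtain N \<sigma> c where "N > 0" "\<forall>i<N. bij (\<sigma> i :: 'j \<Rightarrow> 'j)"
        "\<forall>j. \<bar>c - (\<Sum>i<N. x (\<sigma> i j)) / real N\<bar> \<le> e / 2"
      using infinite_case[OF False M e] by blast
    then show ?thesis using key[OF assms(2,3,4) xW ball, of N \<sigma> "e/2" c] e by simp
  qed
qed

end
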